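(* Let $N=(V,E,c,K)$ be a network with killing, let $o\in V$, and let $X=(X_n)_{n\geq0}$ be the random walk on $N$ started at $X_0=o$. Suppose that \[ \lim_{n\to\infty}\frac{\log\sup_{u\in V}p_n(u,o)}{\log n}=-\infty . \] Then almost surely \[ \lim_{n\to\infty}\frac{\log p_n(X_n,X_0)}{\log\mathbb{G}(X_n,X_0)}=1, \] with the convention that the ratio equals $1$ when $X_n=\dagger$.
   Context: A network with killing is $N=(V,E,c,K)$ where $(V,E)$ is a graph, $c:E\to(0,\infty)$ are conductances and $K:V\to[0,\infty)$ is a killing function. With $c(u)$ the total conductance of oriented edges emanating from $u$ and $c(u,v)$ the total conductance of oriented edges from $u$ to $v$, the random walk on $N$ is the Markov chain on $V\cup\{\dagger\}$ with $P(u,v)=c(u,v)/(c(u)+K(u))$ and $P(u,\dagger)=K(u)/(c(u)+K(u))$ for $u,v\in V$, and $P(\dagger,\dagger)=1$. Write $p_n(u,v)=P^n(u,v)$ and $\mathbb{G}(u,v)=\sum_{n\geq0}p_n(u,v)$. *)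

theory Defs
  imports "HOL-Probability.Probability"
begin

text \<open>A network with killing is encoded by a conductance function c (c u v = total
  conductance of oriented edges from u to v; 0 iff there is no edge) and a killing
  function K. The cemetery state is None; vertices are Some u.\<close>

definition network_with_killing :: "('v \<Rightarrow> 'v \<Rightarrow> real) \<Rightarrow> ('v \<Rightarrow> real) \<Rightarrow> bool" where
  "network_with_killing c K \<longleftrightarrow>
     (\<forall>u v. 0 \<le> c u v \<and> c u v = c v u) \<and>
     (\<forall>u. c u summable_on UNIV) \<and>
     (\<forall>u. 0 \<le> K u) \<and>
     (\<forall>u. 0 < (\<Sum>\<^sub>\<infinity>v. c u v) + K u)"

definition tot_cond :: "('v \<Rightarrow> 'v \<Rightarrow> real) \<Rightarrow> 'v \<Rightarrow> real" where
  "tot_cond c u = (\<Sum>\<^sub>\<infinity>v. c u v)"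

definition trans_prob :: "('v \<Rightarrow> 'v \<Rightarrow> real) \<Rightarrow> ('v \<Rightarrow> real) \<Rightarrow> 'v option \<Rightarrow> 'v option \<Rightarrow> real" where
  "trans_prob c K x y = (case x of
      None \<Rightarrow> (if y = None then 1 else 0)
    | Some u \<Rightarrow> (case y of
         None \<Rightarrow> K u / (tot_cond c u + K u)
       | Some v \<Rightarrow> c u v / (tot_cond c u + K u)))"

fun pn :: "('v \<Rightarrow> 'v \<Rightarrow> real) \<Rightarrow> ('v \<Rightarrow> real) \<Rightarrow> nat \<Rightarrow> 'v option \<Rightarrow> 'v option \<Rightarrow> real" where
  "pn c K 0 x y = (if x = y then 1 else 0)"
| "pn c K (Suc n) x y = (\<Sum>\<^sub>\<infinity>z. trans_prob c K x z * pn c K n z y)"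

definition green :: "('v \<Rightarrow> 'v \<Rightarrow> real) \<Rightarrow> ('v \<Rightarrow> real) \<Rightarrow> 'v option \<Rightarrow> 'v option \<Rightarrow> real" where
  "green c K x y = (\<Sum>n. pn c K n x y)"

definition ext_ln :: "real \<Rightarrow> ereal" where
  "ext_ln x = (if x \<le> 0 then -\<infinity> else ereal (ln x))"

definition is_random_walk ::
  "('v \<Rightarrow> 'v \<Rightarrow> real) \<Rightarrow> ('v \<Rightarrow> real) \<Rightarrow> 'v \<Rightarrow> 'a measure \<Rightarrow> (nat \<Rightarrow> 'a \<Rightarrow> 'v option) \<Rightarrow> bool" where
  "is_random_walk c K r M X \<longleftrightarrow>
     prob_space M \<and>
     (\<forall>n. X n \<in> measurable M (count_space UNIV)) \<and>
     (\<forall>n xs. length xs = Suc n \<longrightarrow>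
        measure M {\<omega> \<in> space M. \<forall>i\<le>n. X i \<omega> = xs ! i}
        = (if xs ! 0 = Some r then 1 else 0) * (\<Prod>i<n. trans_prob c K (xs ! i) (xs ! Suc i)))"

end

theory Submission
  imports Defs
begin

lemma has_sum_delta: "((\<lambda>z. if z = a then (v::real) else 0) has_sum v) UNIV"
proof -
  have "((\<lambda>z. if z = a then (v::real) else 0) has_sum (\<Sum>z\<in>{a}. if z = a then v else 0)) {a}"
    by (rule has_sum_finite) simp
  then have "((\<lambda>z. if z = a then (v::real) else 0) has_sum v) {a}" by simp
  then show ?thesis
    by (subst has_sum_cong_neutral[where T="{a}" and g="\<lambda>z. if z = a then v else 0"]) auto
qed

lemma nwk_tot_nonneg: "network_with_killing c K \<Longrightarrow> 0 \<le> tot_cond c u"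
  unfolding network_with_killing_def tot_cond_def by (auto intro: infsum_nonneg)

lemma nwk_pos: "network_with_killing c K \<Longrightarrow> 0 < tot_cond c u + K u"
  unfolding network_with_killing_def tot_cond_def by auto

lemma tp_nonneg:
  assumes "network_with_killing c K" shows "0 \<le> trans_prob c K x y"
proof -
  have "\<And>u v. 0 \<le> c u v" "\<And>u. 0 \<le> K u" using assms unfolding network_with_killing_def by auto
  with nwk_pos[OF assms] show ?thesis
    unfolding trans_prob_def by (auto split: option.split intro!: divide_nonneg_pos)
qed

lemma tp_has_sum:
  assumes nk: "network_with_killing c K" shows "(trans_prob c K x has_sum 1) UNIV"
proof (cases x)
  case None
  have "trans_prob c K x = (\<lambda>z. if z = None then 1 else 0)"
    by (rule ext) (simp add: None trans_prob_def)
  then show ?thesis using has_sum_delta[of None 1] by simp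
next
  case (Some u)
  define D where "D = tot_cond c u + K u"
  have D: "D > 0" using nwk_pos[OF nk] D_def by auto
  have "c u summable_on UNIV" using nk unfolding network_with_killing_def by auto
  then have "(c u has_sum tot_cond c u) UNIV" unfolding tot_cond_def by simp
  then have "((\<lambda>v. c u v / D) has_sum tot_cond c u / D) UNIV"
    by (rule has_sum_divide_const)
  then have "((trans_prob c K x \<circ> Some) has_sum tot_cond c u / D) UNIV"
    by (simp add: Some trans_prob_def D_def o_def)
  then have "(trans_prob c K x has_sum tot_cond c u / D) (range Some)"
    by (subst has_sum_reindex) auto
  then have "(trans_prob c K x has_sum (trans_prob c K x None + tot_cond c u / D)) (insert None (range Some))"
    by (intro has_sum_insert) auto
  moreover have "insert None (range Some) = UNIV"
    by (auto intro: option.exhaust)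
  moreover have "trans_prob c K x None + tot_cond c u / D = (K u + tot_cond c u) / D"
    by (simp add: Some trans_prob_def D_def add_divide_distrib)
  moreover have "(K u + tot_cond c u) / D = 1"
    using D by (simp add: D_def add.commute)
  ultimately show ?thesis by metis
qed

lemma pn_bounds:
  assumes nk: "network_with_killing c K"
  shows "0 \<le> pn c K n x y \<and> pn c K n x y \<le> 1"
proof (induction n arbitrary: x)
  case 0
  then show ?case by simp
next
  case (Suc n)
  have s1: "trans_prob c K x summable_on UNIV" using tp_has_sum[OF nk] summable_on_def by blast
  have s2: "(\<lambda>z. trans_prob c K x z * pn c K n z y) summable_on UNIV"
    apply (rule summable_on_comparison_test[OF s1])
    using Suc tp_nonneg[OF nk] by (auto intro: mult_left_le mult_nonneg_nonneg)
  have "0 \<le> (\<Sum>\<^sub>\<infinity>z. trans_prob c K x z * pn c K n z y)"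
    using Suc tp_nonneg[OF nk] by (auto intro!: infsum_nonneg)
  moreover have "(\<Sum>\<^sub>\<infinity>z. trans_prob c K x z * pn c K n z y) \<le> (\<Sum>\<^sub>\<infinity>z. trans_prob c K x z)"
    using Suc tp_nonneg[OF nk] s1 s2 by (intro infsum_mono) (auto intro: mult_left_le)
  moreover have "(\<Sum>\<^sub>\<infinity>z. trans_prob c K x z) = 1" using tp_has_sum[OF nk] infsumI by blast
  ultimately show ?case by simp
qed

lemma pn_Suc_has_sum:
  assumes nk: "network_with_killing c K"
  shows "((\<lambda>z. trans_prob c K x z * pn c K n z y) has_sum pn c K (Suc n) x y) UNIV"
proof -
  have s1: "trans_prob c K x summable_on UNIV" using tp_has_sum[OF nk] summable_on_def by blast
  have s2: "(\<lambda>z. trans_prob c K x z * pn c K n z y) summable_on UNIV"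
    apply (rule summable_on_comparison_test[OF s1])
    using pn_bounds[OF nk] tp_nonneg[OF nk] by (auto intro: mult_left_le mult_nonneg_nonneg)
  then show ?thesis by simp
qed

lemma pn_None:
  assumes nk: "network_with_killing c K"
  shows "pn c K n None (Some v) = 0"
proof (induction n)
  case 0 then show ?case by simp
next
  case (Suc n)
  have "(\<lambda>z. trans_prob c K None z * pn c K n z (Some v)) = (\<lambda>_. 0)"
    using Suc by (auto simp: trans_prob_def)
  then show ?case by simp
qed

lemma pn_CK:
  assumes nk: "network_with_killing c K"
  shows "((\<lambda>z. pn c K n x z * trans_prob c K z y) has_sum pn c K (Suc n) x y) UNIV"
proof (induction n arbitrary: x)
  case 0
  have "(\<lambda>z. trans_prob c K x z * pn c K 0 z y) = (\<lambda>z. if z = y then trans_prob c K x y else 0)"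
    by auto
  then have "pn c K (Suc 0) x y = trans_prob c K x y"
    using infsumI[OF has_sum_delta[of y "trans_prob c K x y"]] by simp
  moreover have "(\<lambda>z. pn c K 0 x z * trans_prob c K z y) = (\<lambda>z. if z = x then trans_prob c K x y else 0)"
    by auto
  ultimately show ?case using has_sum_delta[of x "trans_prob c K x y"] by simp
next
  case (Suc n)
  define P where "P = trans_prob c K"
  define F where "F = (\<lambda>(w,z). P x w * (pn c K n w z * P z y))"
  have h1: "((\<lambda>z. F (w,z)) has_sum P x w * pn c K (Suc n) w y) UNIV" for w
    unfolding F_def using has_sum_cmult_right[OF Suc[of w], of "P x w"] by (simp add: P_def)
  have g: "(\<lambda>w. P x w * pn c K (Suc n) w y) summable_on UNIV"
    using pn_Suc_has_sum[OF nk] summable_on_def unfolding P_def by blast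
  have Fsum: "F summable_on (UNIV \<times> UNIV)"
    using summable_on_SigmaI[where A=UNIV and B="\<lambda>_. UNIV", OF h1 g]
      tp_nonneg[OF nk] pn_bounds[OF nk] unfolding F_def P_def by auto
  have e1: "(\<Sum>\<^sub>\<infinity>w. \<Sum>\<^sub>\<infinity>z. F (w,z)) = pn c K (Suc (Suc n)) x y"
    using infsumI[OF h1] by (simp add: P_def)
  have e2: "(\<Sum>\<^sub>\<infinity>w. F (w,z)) = pn c K (Suc n) x z * P z y" for z
  proof -
    have "(\<Sum>\<^sub>\<infinity>w. F (w,z)) = (\<Sum>\<^sub>\<infinity>w. P x w * pn c K n w z) * P z y"
      unfolding F_def using infsum_cmult_left'[of "\<lambda>w. P x w * pn c K n w z" "P z y" UNIV]
      by (simp add: mult.assoc)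
    then show ?thesis by (simp add: P_def)
  qed
  have sw: "(\<Sum>\<^sub>\<infinity>w. \<Sum>\<^sub>\<infinity>z. F (w,z)) = (\<Sum>\<^sub>\<infinity>z. \<Sum>\<^sub>\<infinity>w. F (w,z))"
    by (rule infsum_swap_banach) (use Fsum in \<open>simp add: case_prod_unfold\<close>)
  have Fsum': "(\<lambda>(z,w). F (w,z)) summable_on (UNIV \<times> UNIV)"
    using summable_on_swap[of F UNIV UNIV] Fsum by simp
  have "(\<lambda>z. \<Sum>\<^sub>\<infinity>w. F (w,z)) summable_on UNIV"
    using summable_on_Sigma_banach[of "\<lambda>z w. F (w,z)" UNIV "\<lambda>_. UNIV"] Fsum' by simp
  then have "(\<lambda>z. pn c K (Suc n) x z * P z y) summable_on UNIV" using e2 by simp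
  moreover have "(\<Sum>\<^sub>\<infinity>z. pn c K (Suc n) x z * P z y) = pn c K (Suc (Suc n)) x y"
    using e1 e2 sw by simp
  ultimately show ?case unfolding P_def by (metis has_sum_infsum)
qed

lemma pn_rev:
  assumes nk: "network_with_killing c K"
  shows "(tot_cond c u + K u) * pn c K n (Some u) (Some v) = (tot_cond c v + K v) * pn c K n (Some v) (Some u)"
proof (induction n arbitrary: u v)
  case 0 then show ?case by auto
next
  case (Suc n)
  define \<pi> where "\<pi> = (\<lambda>u. tot_cond c u + K u)"
  define P where "P = trans_prob c K"
  have pos: "\<And>u. \<pi> u > 0" using nwk_pos[OF nk] \<pi>_def by auto
  have sym: "c a b = c b a" for a b using nk unfolding network_with_killing_def by auto
  have db: "\<pi> a * P (Some a) (Some b) = c a b" for a b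
    using pos[of a] by (simp add: P_def \<pi>_def trans_prob_def)
  have trm: "\<pi> u * (P (Some u) z * pn c K n z (Some v)) = \<pi> v * (pn c K n (Some v) z * P z (Some u))" for z
  proof (cases z)
    case None
    then show ?thesis using pn_None[OF nk] by (simp add: P_def trans_prob_def)
  next
    case (Some w)
    have "\<pi> u * (P (Some u) z * pn c K n z (Some v)) = c u w * pn c K n (Some w) (Some v)"
      using db[of u w] Some by (simp add: mult.assoc[symmetric])
    also have "\<dots> = P (Some w) (Some u) * (\<pi> w * pn c K n (Some w) (Some v))"
      using db[of w u] sym[of u w] by (simp add: mult.assoc[symmetric] mult.commute)
    also have "\<dots> = P (Some w) (Some u) * (\<pi> v * pn c K n (Some v) (Some w))"
      using Suc[of w v] by (simp add: \<pi>_def)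
    finally show ?thesis using Some by (simp add: mult.commute mult.left_commute)
  qed
  have "\<pi> u * pn c K (Suc n) (Some u) (Some v) = (\<Sum>\<^sub>\<infinity>z. \<pi> u * (P (Some u) z * pn c K n z (Some v)))"
    by (simp add: P_def infsum_cmult_right')
  also have "\<dots> = (\<Sum>\<^sub>\<infinity>z. \<pi> v * (pn c K n (Some v) z * P z (Some u)))"
    using trm by simp
  also have "\<dots> = \<pi> v * (\<Sum>\<^sub>\<infinity>z. pn c K n (Some v) z * P z (Some u))"
    by (simp add: infsum_cmult_right')
  also have "\<dots> = \<pi> v * pn c K (Suc n) (Some v) (Some u)"
    using infsumI[OF pn_CK[OF nk, of n "Some v" "Some u"]] by (simp add: P_def)
  finally show ?case by (simp add: \<pi>_def)
qed

lemma measure_has_sum_countable: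
  fixes B :: "'i::countable \<Rightarrow> 'a set"
  assumes ps: "prob_space M" and sets: "\<And>i. B i \<in> sets M" and disj: "disjoint_family B"
  shows "((\<lambda>i. measure M (B i)) has_sum measure M (\<Union>i. B i)) UNIV"
proof -
  interpret prob_space M by (rule ps)
  define e where "e = (to_nat :: 'i \<Rightarrow> nat)"
  have inj: "inj e" unfolding e_def by simp
  define A where "A = (\<lambda>j. if j \<in> range e then B (inv e j) else {})"
  have Ae: "A (e i) = B i" for i using inj by (simp add: A_def)
  have Asets: "range A \<subseteq> sets M" using sets by (auto simp: A_def)
  have Adisj: "disjoint_family A"
    unfolding disjoint_family_on_def A_def
  proof (intro ballI impI)
    fix m n assume "m \<in> (UNIV::nat set)" "n \<in> UNIV" "m \<noteq> n"
    then show "(if m \<in> range e then B (inv e m) else {}) \<inter> (if n \<in> range e then B (inv e n) else {}) = {}"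
    proof (cases "m \<in> range e \<and> n \<in> range e")
      case True
      then have "inv e m \<noteq> inv e n" using \<open>m \<noteq> n\<close> by (metis f_inv_into_f)
      then show ?thesis using True disj unfolding disjoint_family_on_def by auto
    qed auto
  qed
  have UA: "(\<Union>j. A j) = (\<Union>i. B i)"
  proof
    show "(\<Union>j. A j) \<subseteq> (\<Union>i. B i)" by (auto simp: A_def split: if_splits)
    show "(\<Union>i. B i) \<subseteq> (\<Union>j. A j)"
    proof
      fix x assume "x \<in> (\<Union>i. B i)"
      then obtain i where "x \<in> B i" by blast
      then have "x \<in> A (e i)" using Ae by simp
      then show "x \<in> (\<Union>j. A j)" by blast
    qed
  qed
  have "(\<lambda>j. measure M (A j)) sums measure M (\<Union>j. A j)"
    by (rule measure_UNION[OF Asets Adisj]) simp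
  then have "((\<lambda>j. measure M (A j)) has_sum measure M (\<Union>i. B i)) UNIV"
    using UA by (intro sums_nonneg_imp_has_sum) auto
  then have "((\<lambda>j. measure M (A j)) has_sum measure M (\<Union>i. B i)) (range e)"
    by (subst has_sum_cong_neutral[where T=UNIV and g="\<lambda>j. measure M (A j)"]) (auto simp: A_def)
  then have "(((\<lambda>j. measure M (A j)) \<circ> e) has_sum measure M (\<Union>i. B i)) UNIV"
    using has_sum_reindex[OF inj_on_subset[OF inj subset_UNIV]] by blast
  then show ?thesis by (simp add: o_def Ae)
qed

lemma rw_prob: "is_random_walk c K r M X \<Longrightarrow> prob_space M"
  unfolding is_random_walk_def by auto

lemma rw_meas: "is_random_walk c K r M X \<Longrightarrow> X n \<in> M \<rightarrow>\<^sub>M count_space UNIV"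
  unfolding is_random_walk_def by auto

lemma rw_set_meas:
  assumes rw: "is_random_walk c K r M X"
  shows "{\<omega>\<in>space M. (\<forall>i<length xs. X i \<omega> = xs!i) \<and> Q (X k \<omega>)} \<in> sets M"
proof -
  have [measurable]: "\<And>n. X n \<in> M \<rightarrow>\<^sub>M count_space UNIV" using rw_meas[OF rw] .
  have Qm: "Q \<in> count_space UNIV \<rightarrow>\<^sub>M count_space UNIV" by simp
  have [measurable]: "Measurable.pred M (\<lambda>\<omega>. Q (X k \<omega>))"
    using measurable_sets[OF rw_meas[OF rw, of k], of "{v. Q v}"]
    by (simp add: pred_def vimage_def Int_def conj_commute)
  show ?thesis by measurable
qed

lemma rw_fdd:
  assumes rw: "is_random_walk c K r M X" and ne: "xs \<noteq> []"
  shows "measure M {\<omega>\<in>space M. (\<forall>i<length xs. X i \<omega> = xs!i) \<and> True}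
       = (if xs!0 = Some r then 1 else 0) * (\<Prod>i<length xs - 1. trans_prob c K (xs!i) (xs!Suc i))"
proof -
  obtain n where n: "length xs = Suc n" using ne by (cases xs) auto
  have "\<And>\<omega>. (\<forall>i<length xs. X i \<omega> = xs!i) \<longleftrightarrow> (\<forall>i\<le>n. X i \<omega> = xs!i)"
    using n by (auto simp: less_Suc_eq_le)
  then show ?thesis using rw n unfolding is_random_walk_def by simp
qed

lemma rw_fdd_app:
  assumes rw: "is_random_walk c K r M X" and ne: "xs \<noteq> []"
  shows "measure M {\<omega>\<in>space M. (\<forall>i<length (xs@[z]). X i \<omega> = (xs@[z])!i) \<and> True}
       = measure M {\<omega>\<in>space M. (\<forall>i<length xs. X i \<omega> = xs!i) \<and> True} * trans_prob c K (last xs) z"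
proof -
  obtain n where n: "length xs = Suc n" using ne by (cases xs) auto
  have "(\<Prod>i<length (xs@[z]) - 1. trans_prob c K ((xs@[z])!i) ((xs@[z])!Suc i))
      = (\<Prod>i<n. trans_prob c K ((xs@[z])!i) ((xs@[z])!Suc i)) * trans_prob c K ((xs@[z])!n) ((xs@[z])!Suc n)"
    using n by simp
  also have "\<dots> = (\<Prod>i<length xs - 1. trans_prob c K (xs!i) (xs!Suc i)) * trans_prob c K (last xs) z"
    using n ne by (simp add: nth_append last_conv_nth)
  finally show ?thesis
    using rw_fdd[OF rw ne] rw_fdd[OF rw, of "xs@[z]"] ne by (simp add: nth_append)
qed

lemma rw_gen:
  fixes c :: "'v::countable \<Rightarrow> 'v \<Rightarrow> real"
  assumes nk: "network_with_killing c K" and rw: "is_random_walk c K r M X" and ne: "xs \<noteq> []"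
  shows "measure M {\<omega>\<in>space M. (\<forall>i<length xs. X i \<omega> = xs!i) \<and> X (length xs - 1 + n) \<omega> = y}
       = measure M {\<omega>\<in>space M. (\<forall>i<length xs. X i \<omega> = xs!i) \<and> True} * pn c K n (last xs) y"
  using ne
proof (induction n arbitrary: xs)
  case 0
  have "{\<omega>\<in>space M. (\<forall>i<length xs. X i \<omega> = xs!i) \<and> X (length xs - 1 + 0) \<omega> = y}
     = (if last xs = y then {\<omega>\<in>space M. (\<forall>i<length xs. X i \<omega> = xs!i) \<and> True} else {})"
    using 0 by (auto simp: last_conv_nth)
  then show ?case by simp
next
  case (Suc n)
  interpret prob_space M using rw_prob[OF rw] .
  define S where "S = {\<omega>\<in>space M. (\<forall>i<length xs. X i \<omega> = xs!i) \<and> X (length xs - 1 + Suc n) \<omega> = y}"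
  define B where "B = (\<lambda>z. {\<omega>\<in>space M. (\<forall>i<length (xs@[z]). X i \<omega> = (xs@[z])!i) \<and> X (length (xs@[z]) - 1 + n) \<omega> = y})"
  have len: "length xs - 1 + Suc n = length xs + n" "Suc (length xs - Suc 0 + n) = length xs + n"
    using Suc.prems by (cases xs, auto)+
  have len3: "\<And>\<omega>. X (Suc (length xs - Suc 0 + n)) \<omega> = X (length xs + n) \<omega>"
    using len by metis
  have SB: "S = (\<Union>z. B z)"
  proof
    show "S \<subseteq> (\<Union>z. B z)"
    proof
      fix \<omega> assume w: "\<omega> \<in> S"
      have "\<omega> \<in> B (X (length xs) \<omega>)"
        using w Suc.prems len unfolding S_def B_def by (auto simp: nth_append less_Suc_eq)
      then show "\<omega> \<in> (\<Union>z. B z)" by blast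
    qed
    show "(\<Union>z. B z) \<subseteq> S"
      using Suc.prems len len3 unfolding S_def B_def by (auto simp: nth_append)
  qed
  have Bsets: "B z \<in> sets M" for z unfolding B_def by (rule rw_set_meas[OF rw])
  have Bdisj: "disjoint_family B"
    unfolding disjoint_family_on_def B_def by (auto simp: nth_append) 
  have hs: "((\<lambda>z. measure M (B z)) has_sum measure M S) UNIV"
    using measure_has_sum_countable[OF rw_prob[OF rw] Bsets Bdisj] SB by simp
  have mB: "measure M (B z) = measure M {\<omega>\<in>space M. (\<forall>i<length xs. X i \<omega> = xs!i) \<and> True} * (trans_prob c K (last xs) z * pn c K n z y)" for z
    using Suc.IH[of "xs@[z]"] rw_fdd_app[OF rw Suc.prems, of z] unfolding B_def by simp
  have "measure M S = (\<Sum>\<^sub>\<infinity>z. measure M (B z))" using infsumI[OF hs] by simp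
  also have "\<dots> = measure M {\<omega>\<in>space M. (\<forall>i<length xs. X i \<omega> = xs!i) \<and> True} * pn c K (Suc n) (last xs) y"
    using mB by (simp add: infsum_cmult_right')
  finally show ?case unfolding S_def .
qed

lemma rw_X0:
  assumes rw: "is_random_walk c K r M X"
  shows "AE \<omega> in M. X 0 \<omega> = Some r"
proof -
  interpret prob_space M using rw_prob[OF rw] .
  have "prob {\<omega>\<in>space M. (\<forall>i<length [Some r]. X i \<omega> = [Some r]!i) \<and> True} = 1"
    using rw_fdd[OF rw, of "[Some r]"] by simp
  from AE_prob_1[OF this] show ?thesis by auto
qed

lemma rw_dist:
  fixes c :: "'v::countable \<Rightarrow> 'v \<Rightarrow> real"
  assumes nk: "network_with_killing c K" and rw: "is_random_walk c K r M X"
  shows "measure M {\<omega>\<in>space M. X n \<omega> = y} = pn c K n (Some r) y"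
proof -
  interpret prob_space M using rw_prob[OF rw] .
  have "measure M {\<omega>\<in>space M. (\<forall>i<length [Some r]. X i \<omega> = [Some r]!i) \<and> X (length [Some r] - 1 + n) \<omega> = y}
      = pn c K n (Some r) y"
    using rw_gen[OF nk rw, of "[Some r]" n y] rw_fdd[OF rw, of "[Some r]"] by simp
  moreover have "measure M {\<omega>\<in>space M. (\<forall>i<length [Some r]. X i \<omega> = [Some r]!i) \<and> X (length [Some r] - 1 + n) \<omega> = y}
      = measure M {\<omega>\<in>space M. (\<forall>i<length []. X i \<omega> = []!i) \<and> X n \<omega> = y}"
  proof (rule measure_eq_AE)
    show "{\<omega>\<in>space M. (\<forall>i<length [Some r]. X i \<omega> = [Some r]!i) \<and> X (length [Some r] - 1 + n) \<omega> = y} \<in> sets M"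
      by (rule rw_set_meas[OF rw])
    show "{\<omega>\<in>space M. (\<forall>i<length []. X i \<omega> = []!i) \<and> X n \<omega> = y} \<in> sets M"
      using rw_set_meas[OF rw, of "[]" "\<lambda>v. v = y" n] by simp
  qed (use rw_X0[OF rw] in auto)
  ultimately show ?thesis by simp
qed

lemma core_ratio:
  fixes L lG b :: real
  assumes "L \<le> lG" "lG \<le> b * L" "L < 0" "b > 0"
  shows "1 \<le> L / lG" "L / lG \<le> 1 / b"
proof -
  have "b * L < 0" using assms by (simp add: mult_pos_neg)
  then have lG0: "lG < 0" using assms by linarith
  show "1 \<le> L / lG" using assms lG0 by (simp add: le_divide_eq)
  have "L / lG \<le> 1 / b \<longleftrightarrow> L * b \<ge> lG"
    using lG0 assms(4) by (simp add: divide_le_eq field_simps)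
  then show "L / lG \<le> 1 / b" using assms by (simp add: mult.commute)
qed

lemma core:
  fixes p G H C :: real and n k :: nat
  assumes k: "k \<ge> 10" and p0: "0 < p" and pk: "p \<le> (real n + 1) powr (- real k)" and n2: "real n + 1 \<ge> 2"
    and C0: "0 \<le> C" and Cn: "C \<le> real n + 1" and H: "H \<le> (real n + 1)^2 * p" and pG: "p \<le> G"
    and hG: "\<And>x. x > 0 \<Longrightarrow> G \<le> x^2 * H + C / x^k"
  shows "\<bar>ln p / ln G - 1\<bar> \<le> 10 / real k"
proof -
  define N where "N = real n + 1"
  define L where "L = ln p"
  have N2: "N \<ge> 2" using n2 N_def by simp
  have lnN: "ln N > 0" using N2 by simp
  have kpos: "real k > 0" using k by simp
  have pos: "0 < N powr (- real k)" using N2 by simp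
  have "L \<le> ln (N powr (- real k))" unfolding L_def using iffD2[OF ln_le_cancel_iff[OF p0 pos]] pk unfolding N_def by (simp only:)
  also have "\<dots> = - real k * ln N" using N2 by (simp add: ln_powr)
  finally have LN: "L \<le> - real k * ln N" .
  have "real k * ln N > 0" using kpos lnN by simp
  then have L0: "L < 0" using LN by linarith
  have lnN': "ln N \<le> - L / real k" using LN kpos by (simp add: field_simps)
  define x where "x = exp (- L / (real k + 2))"
  have x0: "x > 0" unfolding x_def by simp
  have x2: "x^2 = exp (2 * (- L / (real k + 2)))"
    unfolding x_def by (metis exp_of_nat_mult of_nat_numeral)
  have xk: "x^k = exp (real k * (- L / (real k + 2)))"
    unfolding x_def by (metis exp_of_nat_mult)
  have pL: "p = exp L" unfolding L_def using p0 by simp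
  have e1: "x^2 * p = exp (real k * L / (real k + 2))"
  proof -
    have "x^2 * p = exp (2 * (- L / (real k + 2))) * exp L" using x2 pL by simp
    also have "\<dots> = exp (2 * (- L / (real k + 2)) + L)" by (rule exp_add[symmetric])
    finally have "x^2 * p = exp (2 * (- L / (real k + 2)) + L)" .
    moreover have "2 * (- L / (real k + 2)) + L = real k * L / (real k + 2)"
      using kpos by (simp add: field_simps)
    ultimately show ?thesis by simp
  qed
  have e2: "C / x^k = C * exp (real k * L / (real k + 2))"
  proof -
    define a where "a = real k * L / (real k + 2)"
    have "real k * (- L / (real k + 2)) = - a" unfolding a_def by simp
    then have "x^k = inverse (exp a)" using xk by (simp add: exp_minus)
    then have "C / x^k = C * exp a" by (simp add: divide_inverse)
    then show ?thesis unfolding a_def .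
  qed
  have "G \<le> x^2 * H + C / x^k" using hG[OF x0] .
  also have "\<dots> \<le> x^2 * (N^2 * p) + C / x^k"
    using H x0 unfolding N_def by (intro add_right_mono mult_left_mono) auto
  also have "\<dots> = (N^2 + C) * exp (real k * L / (real k + 2))"
    using e1 e2 by (simp add: algebra_simps)
  also have "\<dots> \<le> N^3 * exp (real k * L / (real k + 2))"
  proof -
    have "N^2 + C \<le> N^3"
    proof -
      have "C \<le> N" using Cn N_def by simp
      also have "N \<le> N^2 * (N - 1)"
      proof -
        have a: "N \<le> N * N" using N2 by (simp add: mult_le_cancel_left1)
        have b: "N * N * 1 \<le> N * N * (N - 1)" using N2 by (intro mult_left_mono) auto
        show ?thesis using a b by (simp add: power2_eq_square)
      qed
      finally show ?thesis by (simp add: algebra_simps power3_eq_cube power2_eq_square)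
    qed
    then show ?thesis by (intro mult_right_mono) auto
  qed
  finally have GN: "G \<le> N^3 * exp (real k * L / (real k + 2))" .
  have G0: "G > 0" using pG p0 by simp
  have "ln G \<le> ln (N^3 * exp (real k * L / (real k + 2)))" using GN G0 by simp
  also have "\<dots> = 3 * ln N + real k * L / (real k + 2)"
    using N2 by (simp add: ln_mult ln_realpow)
  also have "\<dots> \<le> 3 * (- L / real k) + real k * L / (real k + 2)"
    using lnN' by simp
  also have "\<dots> \<le> (1 - 5 / real k) * L"
  proof -
    have "real k / (real k + 2) \<ge> 1 - 2 / real k" using kpos by (simp add: field_simps)
    then have "real k / (real k + 2) * L \<le> (1 - 2 / real k) * L" using L0 by (intro mult_right_mono_neg) auto
    moreover have "(1 - 2 / real k) * L = L - 2 * (L / real k)" by (simp add: algebra_simps)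
    moreover have "(1 - 5 / real k) * L = L - 5 * (L / real k)" by (simp add: algebra_simps)
    moreover have "real k / (real k + 2) * L = real k * L / (real k + 2)" by simp
    moreover have "3 * (- L / real k) = - 3 * (L / real k)" by simp
    ultimately show ?thesis by linarith
  qed
  finally have lGb: "ln G \<le> (1 - 5 / real k) * L" .
  have bpos: "1 - 5 / real k > 0" using k by (simp add: field_simps)
  have LG: "L \<le> ln G" using pG p0 L_def by simp
  have r1: "1 \<le> L / ln G" and r2: "L / ln G \<le> 1 / (1 - 5 / real k)"
    using core_ratio[OF LG lGb L0 bpos] by auto
  have "1 / (1 - 5 / real k) - 1 \<le> 10 / real k"
    using k by (simp add: field_simps)
  then show ?thesis using r1 r2 L_def by simp
qed

lemma termwise:
  fixes x q :: real and m k :: nat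
  assumes x0: "x > 0" and q0: "q \<ge> 0"
  shows "q \<le> x^2 * (inverse (real (Suc m) ^ 2) * q) + (1 / x^k) * (real (Suc m) ^ k * q)"
proof (cases "real (Suc m) \<le> x")
  case True
  then have "real (Suc m)^2 \<le> x^2" by (intro power_mono) auto
  then have "1 \<le> x^2 * inverse (real (Suc m) ^ 2)" by (simp add: field_simps)
  then have "q \<le> x^2 * inverse (real (Suc m) ^ 2) * q" using q0 by (simp add: mult_le_cancel_right1)
  moreover have "0 \<le> (1 / x^k) * (real (Suc m) ^ k * q)" using x0 q0 by simp
  ultimately show ?thesis by (simp add: mult.assoc)
next
  case False
  then have "x^k \<le> real (Suc m)^k" using x0 by (intro power_mono) auto
  then have "1 \<le> (1 / x^k) * real (Suc m) ^ k" using x0 by (simp add: field_simps)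
  then have "1 * q \<le> ((1 / x^k) * real (Suc m) ^ k) * q" using q0 by (rule mult_right_mono)
  then have "q \<le> (1 / x^k) * (real (Suc m) ^ k * q)" by (simp only: mult_1 mult.assoc)
  moreover have "0 \<le> x^2 * (inverse (real (Suc m) ^ 2) * q)" using x0 q0 by simp
  ultimately show ?thesis by linarith
qed

lemma hyp_conv:
  fixes f :: "nat \<Rightarrow> real" and B :: real
  assumes f0: "\<And>n. 0 \<le> f n"
    and lim: "((\<lambda>n. ext_ln (f n) / ereal (ln (real n))) \<longlongrightarrow> -\<infinity>) sequentially"
    and B0: "B \<ge> 0"
  shows "eventually (\<lambda>n. f n \<le> (real n + 1) powr (- B)) sequentially"
proof -
  have ev1: "eventually (\<lambda>n. ext_ln (f n) / ereal (ln (real n)) < ereal (-2*B)) sequentially"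
    using lim unfolding tendsto_MInfty by blast
  have ev2: "eventually (\<lambda>n. n \<ge> 3) sequentially" by (rule eventually_ge_at_top)
  from ev1 ev2 show ?thesis
  proof eventually_elim
    case (elim n)
    have n3: "real n \<ge> 3" using elim(2) by simp
    have ln0: "ln (real n) > 0" using n3 by simp
    show ?case
    proof (cases "f n \<le> 0")
      case True
      have "0 < (real n + 1) powr (- B)" by simp
      then show ?thesis using True by linarith
    next
      case False
      then have fp: "f n > 0" by simp
      have "ereal (ln (f n) / ln (real n)) < ereal (-2*B)"
        using elim(1) fp ln0 by (simp add: ext_ln_def)
      then have "ln (f n) / ln (real n) < -2*B" by simp
      then have "ln (f n) < -2*B * ln (real n)" using ln0 by (simp add: divide_less_eq)
      then have "f n < exp (-2*B * ln (real n))" using fp by (metis exp_less_cancel_iff exp_ln)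
      also have "exp (-2*B * ln (real n)) = (real n ^ 2) powr (-B)"
        using n3 by (simp add: powr_def ln_realpow)
      also have "\<dots> \<le> (real n + 1) powr (-B)"
      proof (rule powr_mono2')
        show "- B \<le> 0" using B0 by simp
        show "0 < real n + 1" by simp
        have "3 * real n \<le> real n * real n" using n3 by (intro mult_right_mono) auto
        then show "real n + 1 \<le> real n ^ 2" using n3 unfolding power2_eq_square by linarith
      qed
      finally show ?thesis by simp
    qed
  qed
qed

theorem proposition3p2:
  fixes c :: "'v::countable \<Rightarrow> 'v \<Rightarrow> real" and K :: "'v \<Rightarrow> real" and r :: 'v
    and M :: "'a measure" and X :: "nat \<Rightarrow> 'a \<Rightarrow> 'v option"
  assumes "network_with_killing c K"
    and "is_random_walk c K r M X"
    and "((\<lambda>n. ext_ln (SUP u. pn c K n (Some u) (Some r)) / ereal (ln (real n)))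
            \<longlongrightarrow> -\<infinity>) sequentially"
  shows "AE \<omega> in M. ((\<lambda>n. case X n \<omega> of
                              None \<Rightarrow> 1
                            | Some u \<Rightarrow> ln (pn c K n (Some u) (X 0 \<omega>)) / ln (green c K (Some u) (X 0 \<omega>)))
                      \<longlongrightarrow> 1) sequentially"
proof -
  note nk = assms(1) and rw = assms(2) and hyp = assms(3)
  interpret prob_space M using rw_prob[OF rw] .
  define q where "q = (\<lambda>m u. pn c K m (Some u) (Some r))"
  define f where "f = (\<lambda>m. SUP u. q m u)"
  define w where "w = (\<lambda>m::nat. inverse (real (Suc m) ^ 2))"
  define H where "H = (\<lambda>u. \<Sum>m. w m * q m u)"
  define \<pi> where "\<pi> = (\<lambda>u. tot_cond c u + K u)"
  have q0: "0 \<le> q m u" and q1: "q m u \<le> 1" for m u using pn_bounds[OF nk] unfolding q_def by auto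
  have bdd: "bdd_above (range (q m))" for m by (rule bdd_aboveI[of _ 1]) (auto simp: q1)
  have qf: "q m u \<le> f m" for m u unfolding f_def by (rule cSUP_upper[OF _ bdd]) simp
  have f0: "0 \<le> f m" for m using qf[of m r] q0[of m r] by linarith
  have fhyp: "((\<lambda>n. ext_ln (f n) / ereal (ln (real n))) \<longlongrightarrow> -\<infinity>) sequentially"
    using hyp unfolding f_def q_def .
  have fdec: "eventually (\<lambda>n. f n \<le> (real n + 1) powr (- B)) sequentially" if "B \<ge> 0" for B
    using hyp_conv[OF f0 fhyp that] .
  have w0: "0 \<le> w m" for m unfolding w_def by simp
  have wsum: "summable w"
  proof -
    have "summable (\<lambda>n. inverse (real n ^ 2))" using inverse_power_summable[of 2] by simp
    then have "summable (\<lambda>n. inverse (real (Suc n) ^ 2))" by (subst summable_Suc_iff)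
    then show ?thesis unfolding w_def .
  qed
  have Hs: "summable (\<lambda>m. w m * q m u)" for u
    by (rule summable_comparison_test'[OF wsum, of 0]) (use w0 q0 q1 in \<open>auto intro: mult_left_le\<close>)
  have H0: "0 \<le> H u" for u unfolding H_def by (rule suminf_nonneg[OF Hs]) (simp add: w0 q0)
  have \<pi>pos: "\<pi> u > 0" for u using nwk_pos[OF nk] \<pi>_def by auto
  have dist: "measure M {\<omega>\<in>space M. X n \<omega> = y} = pn c K n (Some r) y" for n y
    by (rule rw_dist[OF nk rw])
  have pfwd: "pn c K m (Some r) (Some u) = \<pi> u / \<pi> r * q m u" for m u
  proof -
    have "\<pi> r * pn c K m (Some r) (Some u) = \<pi> u * q m u"
      using pn_rev[OF nk, of r m u] by (simp add: \<pi>_def q_def)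
    then show ?thesis using \<pi>pos[of r] by (simp add: field_simps)
  qed
  have rowsum: "(\<Sum>u\<in>F. pn c K m (Some r) (Some u)) \<le> 1" if F: "finite F" for F m
  proof -
    define D where "D = (\<lambda>z. {\<omega>\<in>space M. X m \<omega> = z})"
    have Ds: "D z \<in> sets M" for z
      using rw_set_meas[OF rw, of "[]" "\<lambda>v. v = z" m] unfolding D_def by simp
    have Dd: "disjoint_family D" unfolding D_def disjoint_family_on_def by auto
    have DU: "(\<Union>z. D z) = space M" unfolding D_def by auto
    have hs: "((\<lambda>z. measure M (D z)) has_sum 1) UNIV"
      using measure_has_sum_countable[OF rw_prob[OF rw] Ds Dd] DU by (simp add: prob_space)
    have "(\<Sum>z\<in>Some ` F. measure M (D z)) \<le> 1"
      by (rule has_sum_mono'[OF has_sum_finite hs]) (use F in auto)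
    moreover have "(\<Sum>z\<in>Some ` F. measure M (D z)) = (\<Sum>u\<in>F. measure M (D (Some u)))"
      by (subst sum.reindex) auto
    ultimately show ?thesis using dist unfolding D_def by simp
  qed
  define Bs where "Bs = (\<lambda>n. {u. \<not> (0 < q n u \<and> H u \<le> (real n + 1)^2 * q n u)})"
  define Bad where "Bad = (\<lambda>n. {\<omega>\<in>space M. \<exists>u. X n \<omega> = Some u \<and> u \<in> Bs n})"
  have Bads: "Bad n \<in> sets M" for n
    using rw_set_meas[OF rw, of "[]" "\<lambda>v. \<exists>u. v = Some u \<and> u \<in> Bs n" n] unfolding Bad_def by simp
  define S where "S = suminf w"
  have ws: "summable (\<lambda>m. w m * pn c K m (Some r) (Some u))" for u
    by (rule summable_comparison_test'[OF wsum, of 0])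
       (use w0 pn_bounds[OF nk] in \<open>auto intro: mult_left_le\<close>)
  have Bad_bound: "measure M (Bad n) \<le> S / (real n + 1)^2" for n
  proof -
    define E where "E = (\<lambda>u. {\<omega>\<in>space M. X n \<omega> = Some u \<and> u \<in> Bs n})"
    have Es: "E u \<in> sets M" for u
      using rw_set_meas[OF rw, of "[]" "\<lambda>v. v = Some u \<and> u \<in> Bs n" n] unfolding E_def by simp
    have Ed: "disjoint_family E" unfolding E_def disjoint_family_on_def by auto
    have EU: "(\<Union>u. E u) = Bad n" unfolding E_def Bad_def by auto
    have hs: "((\<lambda>u. measure M (E u)) has_sum measure M (Bad n)) UNIV"
      using measure_has_sum_countable[OF rw_prob[OF rw] Es Ed] EU by simp
    define R where "R = (\<lambda>u. (\<Sum>m. w m * pn c K m (Some r) (Some u)) / (real n + 1)^2)"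
    have Rsum: "(\<Sum>m. w m * pn c K m (Some r) (Some u)) = \<pi> u / \<pi> r * H u" for u
    proof -
      have "(\<lambda>m. w m * pn c K m (Some r) (Some u)) = (\<lambda>m. \<pi> u / \<pi> r * (w m * q m u))"
        using pfwd by (simp add: mult.commute mult.left_commute)
      then show ?thesis using suminf_mult[OF Hs[of u], of "\<pi> u / \<pi> r"] unfolding H_def by simp
    qed
    have R0: "0 \<le> R u" for u
      unfolding R_def Rsum using \<pi>pos[of u] \<pi>pos[of r] H0[of u] by simp
    have pt: "measure M (E u) \<le> R u" for u
    proof (cases "u \<in> Bs n")
      case False
      then have "E u = {}" unfolding E_def by auto
      then show ?thesis using R0 by simp
    next
      case True
      then have "E u = {\<omega>\<in>space M. X n \<omega> = Some u}" unfolding E_def by auto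
      then have mE: "measure M (E u) = \<pi> u / \<pi> r * q n u" using dist pfwd by simp
      show ?thesis
      proof (cases "0 < q n u")
        case False
        then have "q n u = 0" using q0[of n u] by simp
        then show ?thesis using mE R0 by simp
      next
        case qp: True
        then have "(real n + 1)^2 * q n u < H u" using True unfolding Bs_def by auto
        then have "q n u \<le> H u / (real n + 1)^2" by (simp add: field_simps)
        then have "\<pi> u / \<pi> r * q n u \<le> \<pi> u / \<pi> r * (H u / (real n + 1)^2)"
          using \<pi>pos[of u] \<pi>pos[of r] by (intro mult_left_mono) auto
        then show ?thesis using mE unfolding R_def Rsum by simp
      qed
    qed
    have "measure M (Bad n) = (\<Sum>\<^sub>\<infinity>u. measure M (E u))" using infsumI[OF hs] by simp
    also have "\<dots> \<le> S / (real n + 1)^2"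
    proof (rule infsum_le_finite_sums)
      show "(\<lambda>u. measure M (E u)) summable_on UNIV" using hs summable_on_def by blast
      fix F :: "'v set" assume F: "finite F" "F \<subseteq> UNIV"
      have "(\<Sum>u\<in>F. measure M (E u)) \<le> (\<Sum>u\<in>F. R u)" by (rule sum_mono) (rule pt)
      also have "\<dots> = (\<Sum>u\<in>F. \<Sum>m. w m * pn c K m (Some r) (Some u)) / (real n + 1)^2"
        unfolding R_def by (simp add: sum_divide_distrib)
      also have "(\<Sum>u\<in>F. \<Sum>m. w m * pn c K m (Some r) (Some u)) = (\<Sum>m. \<Sum>u\<in>F. w m * pn c K m (Some r) (Some u))"
        by (rule suminf_sum[symmetric]) (rule ws)
      also have "\<dots> \<le> S" unfolding S_def
      proof (rule suminf_le)
        fix m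
        have "(\<Sum>u\<in>F. w m * pn c K m (Some r) (Some u)) = w m * (\<Sum>u\<in>F. pn c K m (Some r) (Some u))"
          by (simp add: sum_distrib_left)
        also have "\<dots> \<le> w m * 1" by (rule mult_left_mono[OF rowsum[OF F(1)] w0])
        finally show "(\<Sum>u\<in>F. w m * pn c K m (Some r) (Some u)) \<le> w m" by simp
        show "summable (\<lambda>m. \<Sum>u\<in>F. w m * pn c K m (Some r) (Some u))"
          by (rule summable_sum) (rule ws)
        show "summable w" by (rule wsum)
      qed
      finally show "(\<Sum>u\<in>F. measure M (E u)) \<le> S / (real n + 1)^2"
        by (simp add: divide_right_mono)
    qed
    finally show ?thesis .
  qed
  have BC: "AE \<omega> in M. eventually (\<lambda>n. \<omega> \<in> space M - Bad n) sequentially"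
  proof (rule borel_cantelli_AE1)
    show "\<And>n. Bad n \<in> sets M" by (rule Bads)
    show "\<And>n. emeasure M (Bad n) < \<infinity>" by (simp add: less_top[symmetric])
    have "summable (\<lambda>n. S * w n)" by (rule summable_mult[OF wsum])
    moreover have "S * w n = S / (real n + 1)^2" for n unfolding w_def by (simp add: divide_inverse add.commute)
    ultimately have "summable (\<lambda>n. S / (real n + 1)^2)" by simp
    then show "summable (\<lambda>n. measure M (Bad n))"
      by (rule summable_comparison_test'[of _ 0]) (use Bad_bound in auto)
  qed
  from BC rw_X0[OF rw] show ?thesis
  proof eventually_elim
    case (elim \<omega>)
    note X0 = elim(2)
    show ?case
    proof (rule tendstoI)
      fix e :: real assume e: "0 < e"
      define k where "k = nat \<lceil>10 / e\<rceil> + 10"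
      have k10: "k \<ge> 10" unfolding k_def by simp
      have "10 / e \<le> real (nat \<lceil>10 / e\<rceil>)" by (rule real_nat_ceiling_ge)
      then have "real k > 10 / e" unfolding k_def by simp
      then have ke: "10 / real k < e" using e k10 by (simp add: field_simps)
      define Ck where "Ck = (\<Sum>m. real (Suc m)^k * f m)"
      have Cks: "summable (\<lambda>m. real (Suc m)^k * f m)"
      proof (rule summable_comparison_test_ev[OF _ wsum])
        have "eventually (\<lambda>m. f m \<le> (real m + 1) powr (- (real k + 2))) sequentially"
          by (rule fdec) simp
        then show "eventually (\<lambda>m. norm (real (Suc m)^k * f m) \<le> w m) sequentially"
        proof eventually_elim
          case (elim m)
          have kk: "real k + 2 = real (k + 2)" by simp
          have sm: "real m + 1 = real (Suc m)" by simp
          have "(real m + 1) powr (- (real k + 2)) = inverse (real (Suc m) powr (real (k + 2)))"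
            unfolding kk sm by (rule powr_minus)
          also have "real (Suc m) powr (real (k + 2)) = real (Suc m) ^ (k + 2)"
            by (rule powr_realpow) simp
          finally have "(real m + 1) powr (- (real k + 2)) = inverse (real (Suc m) ^ (k + 2))" .
          then have "real (Suc m)^k * f m \<le> real (Suc m)^k * inverse (real (Suc m) ^ (k + 2))"
            using elim by (intro mult_left_mono) auto
          also have "\<dots> = w m"
          proof -
            have aux: "a^k * inverse (a^(k+2)) = inverse (a^2)" if "a > 0" for a :: real
              using that by (simp add: power_add field_simps power2_eq_square)
            show ?thesis unfolding w_def by (rule aux) simp
          qed
          finally show ?case using f0[of m] by simp
        qed
      qed
      have ev3: "eventually (\<lambda>n. f n \<le> (real n + 1) powr (- real k)) sequentially"
        by (rule fdec) simp
      have ev4: "eventually (\<lambda>n. 2 \<le> real n + 1 \<and> Ck \<le> real n + 1) sequentially"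
        using eventually_ge_at_top[of "nat \<lceil>Ck\<rceil> + 1"] by eventually_elim linarith
      from elim(1) ev3 ev4
      show "eventually (\<lambda>n. dist (case X n \<omega> of None \<Rightarrow> 1
              | Some u \<Rightarrow> ln (pn c K n (Some u) (X 0 \<omega>)) / ln (green c K (Some u) (X 0 \<omega>))) 1 < e) sequentially"
      proof eventually_elim
        case (elim n)
        show ?case
        proof (cases "X n \<omega>")
          case None
          then show ?thesis using e by simp
        next
          case (Some u)
          have "u \<notin> Bs n" using elim(1) Some unfolding Bad_def by auto
          then have qpos: "0 < q n u" and Hb: "H u \<le> (real n + 1)^2 * q n u" unfolding Bs_def by auto
          define C where "C = (\<Sum>m. real (Suc m)^k * q m u)"
          have Cs: "summable (\<lambda>m. real (Suc m)^k * q m u)"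
            by (rule summable_comparison_test'[OF Cks, of 0]) (use q0 qf in \<open>auto intro: mult_left_mono\<close>)
          have CCk: "C \<le> Ck" unfolding C_def Ck_def
            by (rule suminf_le[OF _ Cs Cks]) (use qf in \<open>auto intro: mult_left_mono\<close>)
          have C0: "0 \<le> C" unfolding C_def by (rule suminf_nonneg[OF Cs]) (simp add: q0)
          have qs: "summable (\<lambda>m. q m u)"
          proof (rule summable_comparison_test'[OF Cs, of 0])
            fix m :: nat assume "m \<ge> 0"
            have "1 \<le> real (Suc m)^k" by (rule one_le_power) simp
            then have "1 * q m u \<le> real (Suc m)^k * q m u" using q0 by (rule mult_right_mono)
            then show "norm (q m u) \<le> real (Suc m)^k * q m u" using q0[of m u] by simp
          qed
          define G where "G = green c K (Some u) (Some r)"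
          have Gq: "G = (\<Sum>m. q m u)" unfolding G_def green_def q_def by simp
          have pG: "q n u \<le> G" unfolding Gq
            using sum_le_suminf[OF qs, of "{n}"] q0 by simp
          have hG: "G \<le> x^2 * H u + C / x^k" if x0: "x > 0" for x
          proof -
            have s1: "summable (\<lambda>m. x^2 * (w m * q m u))" by (rule summable_mult[OF Hs])
            have s2: "summable (\<lambda>m. (1 / x^k) * (real (Suc m)^k * q m u))" by (rule summable_mult[OF Cs])
            have "G \<le> (\<Sum>m. x^2 * (w m * q m u) + (1 / x^k) * (real (Suc m)^k * q m u))"
              unfolding Gq
              by (rule suminf_le[OF _ qs summable_add[OF s1 s2]])
                 (use termwise[OF x0 q0] in \<open>simp add: w_def\<close>)
            also have "\<dots> = (\<Sum>m. x^2 * (w m * q m u)) + (\<Sum>m. (1 / x^k) * (real (Suc m)^k * q m u))"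
              by (rule suminf_add[OF s1 s2, symmetric])
            also have "(\<Sum>m. x^2 * (w m * q m u)) = x^2 * H u"
              unfolding H_def by (rule suminf_mult[OF Hs])
            also have "(\<Sum>m. (1 / x^k) * (real (Suc m)^k * q m u)) = (1 / x^k) * C"
              unfolding C_def by (rule suminf_mult[OF Cs])
            finally show ?thesis by simp
          qed
          have pk: "q n u \<le> (real n + 1) powr (- real k)" using qf[of n u] elim(2) by linarith
          have Cn: "C \<le> real n + 1" using CCk elim(3) by linarith
          have n2: "real n + 1 \<ge> 2" using elim(3) by linarith
          have "\<bar>ln (q n u) / ln G - 1\<bar> \<le> 10 / real k"
            by (rule core[OF k10 qpos pk n2 C0 Cn Hb pG hG])
          then have "\<bar>ln (q n u) / ln G - 1\<bar> < e" using ke by linarith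
          then show ?thesis using Some X0 unfolding G_def q_def by (simp add: dist_real_def)
        qed
      qed
    qed
  qed
qed

end
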